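(* Let $n\ge 2$ and let $\mathcal{P}_E^c(Q_{4n})$ be the conjugacy super enhanced power graph of the generalized quaternion group $Q_{4n}$. (i) If $n$ is odd, the Sombor spectrum of $\mathcal{P}_E^c(Q_{4n})$ consists of $-(4n-1)\sqrt2$ with multiplicity $1$, $-(2n-1)\sqrt2$ with multiplicity $2n-3$, $-(2n+1)\sqrt2$ with multiplicity $2n-1$, and the three roots (with multiplicity) of \[\big(x-(4n-1)\sqrt2\big)\big(x-(2n-1)(2n-3)\sqrt2\big)\big(x-(2n-1)(2n+1)\sqrt2\big)-8(n-1)(10n^2-6n+1)\big(x-(2n-1)(2n+1)\sqrt2\big)-8n(10n^2-2n+1)\big(x-(2n-1)(2n-3)\sqrt2\big).\] (ii) If $n$ is even, the Sombor spectrum consists of $-(4n-1)\sqrt2$ with multiplicity $1$, $-(2n-1)\sqrt2$ with multiplicity $2n-3$, $-(n+1)\sqrt2$ with multiplicity $2n-2$, $(n^2-1)\sqrt2$ with multiplicity $1$, and the three roots (with multiplicity) of \[\big(x-(4n-1)\sqrt2\big)\big(x-(n-1)(n+1)\sqrt2\big)\big(x-(2n-1)(2n-3)\sqrt2\big)-8(n-1)(10n^2-6n+1)\big(x-(n-1)(n+1)\sqrt2\big)-4n(17n^2-6n+2)\big(x-(2n-3)(2n-1)\sqrt2\big).\]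
   Context: For a finite simple graph $\Gamma$ with vertices $u_1,\dots,u_N$, the Sombor matrix $S(\Gamma)$ has $(i,j)$ entry $\sqrt{\deg(u_i)^2+\deg(u_j)^2}$ if $u_i,u_j$ are adjacent and $0$ otherwise; the Sombor spectrum is the multiset of its eigenvalues. $Q_{4n}=\langle a,b: a^{2n}=e,\ a^n=b^2,\ ba=a^{-1}b\rangle$. The enhanced power graph $\mathcal{P}_E(G)$ has vertex set $G$, distinct vertices adjacent iff they lie in a common cyclic subgroup. The conjugacy super enhanced power graph $\mathcal{P}_E^c(G)$ has vertex set $G$, and distinct $g,h$ are adjacent iff $g,h$ are conjugate or there exist $g'$ conjugate to $g$ and $h'$ conjugate to $h$ adjacent in $\mathcal{P}_E(G)$. *)

theory Defs
  imports "HOL-Algebra.Group" "HOL-Algebra.Generated_Groups" "Jordan_Normal_Form.Char_Poly"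
begin

text \<open>Concrete model of Q_{4n}: the pair (i,j) with i < 2n, j < 2 stands for a^i b^j.
  Multiplication uses b^j a^k = a^((-1)^j k) b^j and b^2 = a^n.\<close>
definition Q4n_mult :: "nat \<Rightarrow> nat \<times> nat \<Rightarrow> nat \<times> nat \<Rightarrow> nat \<times> nat" where
  "Q4n_mult n x y =
     ((fst x + (if snd x = 0 then fst y else 2*n - fst y)
         + (if snd x = 1 \<and> snd y = 1 then n else 0)) mod (2*n),
      (snd x + snd y) mod 2)"

definition Q4n :: "nat \<Rightarrow> (nat \<times> nat) monoid" where
  "Q4n n = \<lparr> carrier = {0..<2*n} \<times> {0..<2}, monoid.mult = Q4n_mult n, monoid.one = (0,0) \<rparr>"

definition conjugate_in :: "('g, 'b) monoid_scheme \<Rightarrow> 'g \<Rightarrow> 'g \<Rightarrow> bool" where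
  "conjugate_in G g h \<longleftrightarrow> (\<exists>x\<in>carrier G. h = x \<otimes>\<^bsub>G\<^esub> g \<otimes>\<^bsub>G\<^esub> inv\<^bsub>G\<^esub> x)"

definition enh_power_adj :: "('g, 'b) monoid_scheme \<Rightarrow> 'g \<Rightarrow> 'g \<Rightarrow> bool" where
  "enh_power_adj G g h \<longleftrightarrow> g \<in> carrier G \<and> h \<in> carrier G \<and> g \<noteq> h \<and>
     (\<exists>c\<in>carrier G. g \<in> generate G {c} \<and> h \<in> generate G {c})"

definition conj_super_enh_adj :: "('g, 'b) monoid_scheme \<Rightarrow> 'g \<Rightarrow> 'g \<Rightarrow> bool" where
  "conj_super_enh_adj G g h \<longleftrightarrow> g \<in> carrier G \<and> h \<in> carrier G \<and> g \<noteq> h \<and>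
     (conjugate_in G g h \<or>
      (\<exists>g' h'. conjugate_in G g g' \<and> conjugate_in G h h' \<and> enh_power_adj G g' h'))"

definition graph_deg :: "'v set \<Rightarrow> ('v \<Rightarrow> 'v \<Rightarrow> bool) \<Rightarrow> 'v \<Rightarrow> nat" where
  "graph_deg V E v = card {w \<in> V. E v w}"

definition sombor_matrix :: "nat \<Rightarrow> (nat \<Rightarrow> 'v) \<Rightarrow> 'v set \<Rightarrow> ('v \<Rightarrow> 'v \<Rightarrow> bool) \<Rightarrow> real mat" where
  "sombor_matrix N vs V E = mat N N (\<lambda>(i,j).
     if E (vs i) (vs j)
     then sqrt (real (graph_deg V E (vs i)) ^ 2 + real (graph_deg V E (vs j)) ^ 2)
     else 0)"

definition sombor_spectrum :: "nat \<Rightarrow> (nat \<Rightarrow> 'v) \<Rightarrow> 'v set \<Rightarrow> ('v \<Rightarrow> 'v \<Rightarrow> bool) \<Rightarrow> real multiset" where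
  "sombor_spectrum N vs V E = proots (char_poly (sombor_matrix N vs V E))"

definition Q4n_enum :: "nat \<Rightarrow> nat \<Rightarrow> nat \<times> nat" where
  "Q4n_enum n k = (k mod (2*n), k div (2*n))"

definition Q4n_CSEPG_spectrum :: "nat \<Rightarrow> real multiset" where
  "Q4n_CSEPG_spectrum n =
     sombor_spectrum (4*n) (Q4n_enum n) (carrier (Q4n n)) (conj_super_enh_adj (Q4n n))"

end

theory Submission
  imports Defs
begin



lemma sylvester_det:
  fixes A :: "real mat"
  assumes A: "A \<in> carrier_mat n k" and B: "B \<in> carrier_mat k n"
  shows "det (1\<^sub>m n - A * B) = det (1\<^sub>m k - B * A)"
proof -
  let ?M = "four_block_mat (1\<^sub>m n) A B (1\<^sub>m k)"
  let ?P1 = "four_block_mat (1\<^sub>m n) (-A) (0\<^sub>m k n) (1\<^sub>m k)"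
  let ?P2 = "four_block_mat (1\<^sub>m n) (0\<^sub>m n k) (-B) (1\<^sub>m k)"
  have M: "?M \<in> carrier_mat (n+k) (n+k)" using A B by auto
  have P1: "?P1 \<in> carrier_mat (n+k) (n+k)" using A B by auto
  have P2: "?P2 \<in> carrier_mat (n+k) (n+k)" using A B by auto
  have dP1: "det ?P1 = 1"
    by (subst det_four_block_mat_lower_left_zero[of _ n _ k], insert A, auto)
  have dP2: "det ?P2 = 1"
    by (subst det_four_block_mat_upper_right_zero[of _ n _ k], insert B, auto)
  have e1: "?M * ?P1 = four_block_mat (1\<^sub>m n) (0\<^sub>m n k) B (1\<^sub>m k - B * A)"
    apply (subst mult_four_block_mat[of _ n n _ k])
    using A B by (auto simp: mult_minus_distrib_mat)
  have e2: "?M * ?P2 = four_block_mat (1\<^sub>m n - A * B) A (0\<^sub>m k n) (1\<^sub>m k)"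
    apply (subst mult_four_block_mat[of _ n n _ k])
    using A B by (auto simp: mult_minus_distrib_mat)
  have "det ?M = det (?M * ?P1)" using det_mult[OF M P1] dP1 by simp
  also have "\<dots> = det (four_block_mat (1\<^sub>m n) (0\<^sub>m n k) B (1\<^sub>m k - B * A))" using e1 by simp
  also have "\<dots> = det (1\<^sub>m n) * det (1\<^sub>m k - B * A)"
    by (rule det_four_block_mat_upper_right_zero, insert A B, auto)
  finally have 1: "det ?M = det (1\<^sub>m k - B * A)" by simp
  have "det ?M = det (?M * ?P2)" using det_mult[OF M P2] dP2 by simp
  also have "\<dots> = det (four_block_mat (1\<^sub>m n - A * B) A (0\<^sub>m k n) (1\<^sub>m k))" using e2 by simp
  also have "\<dots> = det (1\<^sub>m n - A * B) * det (1\<^sub>m k)"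
    by (rule det_four_block_mat_lower_left_zero, insert A B, auto)
  finally have 2: "det ?M = det (1\<^sub>m n - A * B)" by simp
  from 1 2 show ?thesis by simp
qed


lemma det_diag_real:
  "det (mat N N (\<lambda>(u,v). if u = v then (f u :: real) else 0)) = (\<Prod>u<N. f u)"
proof -
  have "det (mat N N (\<lambda>(u,v). if u = v then (f u :: real) else 0))
       = prod_list (diag_mat (mat N N (\<lambda>(u,v). if u = v then (f u :: real) else 0)))"
    by (rule det_upper_triangular[of _ N], auto simp: upper_triangular_def)
  also have "\<dots> = (\<Prod>u<N. f u)" unfolding prod_list_diag_prod
    by (simp add: atLeast0LessThan)
  finally show ?thesis .
qed

lemma sum_if_eq_card:
  fixes N :: nat
  shows "(\<Sum>u<N. if cls u = j then (c :: real) else 0) = c * real (card {u. u < N \<and> cls u = j})"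
  using sum.inter_filter[OF finite_lessThan[of N], of "\<lambda>_. c" "\<lambda>u. cls u = j"] by (simp add: mult.commute)

lemma class_det:
  fixes W :: "nat \<Rightarrow> nat \<Rightarrow> real" and cls :: "nat \<Rightarrow> nat"
  assumes cls: "\<And>u. u < N \<Longrightarrow> cls u < k"
    and dnz: "\<And>j. j < k \<Longrightarrow> x + W j j \<noteq> 0"
  shows "det (mat N N (\<lambda>(u,v). (if u = v then x else 0) - (if u = v then 0 else W (cls u) (cls v))))
           * (\<Prod>j<k. x + W j j)
       = (\<Prod>u<N. x + W (cls u) (cls u))
           * det (mat k k (\<lambda>(i,j). (if i = j then x + W i i else 0) - W i j * real (card {u. u < N \<and> cls u = j})))"
proof -
  define d where "d j = x + W j j" for j
  define s where "s j = real (card {u. u < N \<and> cls u = j})" for j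
  define Mx where "Mx = mat N N (\<lambda>(u,v). (if u = v then x else 0) - (if u = v then 0 else W (cls u) (cls v)))"
  define Dg where "Dg = mat N N (\<lambda>(u,v). if u = v then d (cls u) else 0)"
  define A where "A = mat N k (\<lambda>(u,j). if cls u = j then 1 / d j else 0)"
  define B where "B = mat k N (\<lambda>(i,v). W i (cls v))"
  define Q where "Q = mat k k (\<lambda>(i,j). (if i = j then d i else 0) - W i j * s j)"
  define Dk where "Dk = mat k k (\<lambda>(i,j). if i = j then d i else 0)"
  have A: "A \<in> carrier_mat N k" and B: "B \<in> carrier_mat k N" unfolding A_def B_def by auto
  have AB: "A * B = mat N N (\<lambda>(u,v). W (cls u) (cls v) / d (cls u))"
  proof (rule eq_matI)
    fix u v assume u: "u < dim_row (mat N N (\<lambda>(u,v). W (cls u) (cls v) / d (cls u)))"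
      and v: "v < dim_col (mat N N (\<lambda>(u,v). W (cls u) (cls v) / d (cls u)))"
    have "(A * B) $$ (u,v) = (\<Sum>j<k. (if cls u = j then 1 / d j else 0) * W j (cls v))"
      using u v A B unfolding A_def B_def
      by (auto simp: scalar_prod_def atLeast0LessThan intro!: sum.cong)
    also have "\<dots> = (\<Sum>j<k. if j = cls u then W j (cls v) / d j else 0)"
      by (rule sum.cong, auto)
    also have "\<dots> = W (cls u) (cls v) / d (cls u)" using cls u by simp
    finally show "(A * B) $$ (u,v) = mat N N (\<lambda>(u,v). W (cls u) (cls v) / d (cls u)) $$ (u,v)"
      using u v by simp
  qed (use A B in auto)
  have BA: "B * A = mat k k (\<lambda>(i,j). W i j / d j * s j)"
  proof (rule eq_matI)
    fix i j assume i: "i < dim_row (mat k k (\<lambda>(i,j). W i j / d j * s j))"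
      and j: "j < dim_col (mat k k (\<lambda>(i,j). W i j / d j * s j))"
    have "(B * A) $$ (i,j) = (\<Sum>u<N. W i (cls u) * (if cls u = j then 1 / d j else 0))"
      using i j A B unfolding A_def B_def
      by (auto simp: scalar_prod_def atLeast0LessThan intro!: sum.cong)
    also have "\<dots> = (\<Sum>u<N. if cls u = j then W i j / d j else 0)"
      by (rule sum.cong, auto)
    also have "\<dots> = W i j / d j * s j" unfolding s_def by (rule sum_if_eq_card)
    finally show "(B * A) $$ (i,j) = mat k k (\<lambda>(i,j). W i j / d j * s j) $$ (i,j)"
      using i j by simp
  qed (use A B in auto)
  have Mx: "Mx = Dg * (1\<^sub>m N - A * B)"
  proof (rule eq_matI)
    fix u v assume u: "u < dim_row (Dg * (1\<^sub>m N - A * B))" and v: "v < dim_col (Dg * (1\<^sub>m N - A * B))"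
    hence u: "u < N" and v: "v < N" unfolding Dg_def AB by auto
    have "(Dg * (1\<^sub>m N - A * B)) $$ (u,v)
        = (\<Sum>w<N. (if u = w then d (cls u) else 0) * ((if w = v then 1 else 0) - W (cls w) (cls v) / d (cls w)))"
      using u v unfolding Dg_def AB
      by (auto simp: scalar_prod_def atLeast0LessThan intro!: sum.cong)
    also have "\<dots> = (\<Sum>w<N. if w = u then d (cls u) * ((if u = v then 1 else 0) - W (cls u) (cls v) / d (cls u)) else 0)"
      by (rule sum.cong, auto)
    also have "\<dots> = d (cls u) * ((if u = v then 1 else 0) - W (cls u) (cls v) / d (cls u))"
      using u by simp
    also have "\<dots> = Mx $$ (u,v)"
      using u v dnz[OF cls[OF u]] unfolding Mx_def d_def by (auto simp: field_simps)
    finally show "Mx $$ (u,v) = (Dg * (1\<^sub>m N - A * B)) $$ (u,v)" by simp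
  qed (auto simp: Mx_def Dg_def AB)
  have Q: "Q = (1\<^sub>m k - B * A) * Dk"
  proof (rule eq_matI)
    fix i j assume i: "i < dim_row ((1\<^sub>m k - B * A) * Dk)" and j: "j < dim_col ((1\<^sub>m k - B * A) * Dk)"
    hence i: "i < k" and j: "j < k" unfolding Dk_def BA by auto
    have "((1\<^sub>m k - B * A) * Dk) $$ (i,j)
        = (\<Sum>w<k. ((if i = w then 1 else 0) - W i w / d w * s w) * (if w = j then d j else 0))"
      using i j unfolding Dk_def BA
      by (auto simp: scalar_prod_def atLeast0LessThan intro!: sum.cong)
    also have "\<dots> = (\<Sum>w<k. if w = j then ((if i = j then 1 else 0) - W i j / d j * s j) * d j else 0)"
      by (rule sum.cong, auto)
    also have "\<dots> = ((if i = j then 1 else 0) - W i j / d j * s j) * d j"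
      using j by simp
    also have "\<dots> = Q $$ (i,j)"
      using i j dnz[OF j] unfolding Q_def d_def by (auto simp: field_simps)
    finally show "Q $$ (i,j) = ((1\<^sub>m k - B * A) * Dk) $$ (i,j)" by simp
  qed (auto simp: Q_def Dk_def BA)
  have "det Mx = det Dg * det (1\<^sub>m N - A * B)"
    unfolding Mx by (rule det_mult, auto simp: Dg_def AB)
  also have "det (1\<^sub>m N - A * B) = det (1\<^sub>m k - B * A)" by (rule sylvester_det[OF A B])
  finally have 1: "det Mx = det Dg * det (1\<^sub>m k - B * A)" .
  have 2: "det Q = det (1\<^sub>m k - B * A) * det Dk"
    unfolding Q by (rule det_mult, auto simp: Dk_def BA)
  have "det Dg = (\<Prod>u<N. d (cls u))" unfolding Dg_def by (rule det_diag_real)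
  moreover have "det Dk = (\<Prod>j<k. d j)" unfolding Dk_def by (rule det_diag_real)
  ultimately show ?thesis using 1 2 unfolding Mx_def[symmetric] Q_def[symmetric] d_def[symmetric] s_def[symmetric]
    by (simp add: ac_simps)
qed


lemma det_laplace_mat: "det (mat (Suc n) (Suc n) g) =
   (\<Sum>j<Suc n. g (0,j) * (-1)^j * det (mat n n (\<lambda>(a,b). g (Suc a, if b < j then b else Suc b)))) "
proof -
  have "det (mat (Suc n) (Suc n) g) = (\<Sum>j<Suc n. mat (Suc n) (Suc n) g $$ (0,j) * cofactor (mat (Suc n) (Suc n) g) 0 j)"
    by (rule laplace_expansion_row, auto)
  also have "\<dots> = (\<Sum>j<Suc n. g (0,j) * (-1)^j * det (mat n n (\<lambda>(a,b). g (Suc a, if b < j then b else Suc b))))"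
  proof (rule sum.cong[OF refl])
    fix j assume j: "j \<in> {..<Suc n}"
    have "mat_delete (mat (Suc n) (Suc n) g) 0 j = mat n n (\<lambda>(a,b). g (Suc a, if b < j then b else Suc b))"
      using j by (intro eq_matI, auto simp: mat_delete_def insert_index_def)
    thus "mat (Suc n) (Suc n) g $$ (0,j) * cofactor (mat (Suc n) (Suc n) g) 0 j = g (0,j) * (-1)^j * det (mat n n (\<lambda>(a,b). g (Suc a, if b < j then b else Suc b)))"
      using j by (simp add: cofactor_def)
  qed
  finally show ?thesis .
qed
lemma det1: "det (mat 1 1 g) = g (0,0)" by (subst det_single, auto)
lemma det2: "det (mat 2 2 g) = g (0,0) * g (1,1) - g (0,1) * (g (1,0) :: real)"
  by (simp add: numeral_2_eq_2 det_laplace_mat det1[unfolded One_nat_def])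
lemma det3: "det (mat 3 3 g) = g (0,0) * (g (1,1) * g (2,2) - g(1,2) * g(2,1))
   - g (0,1) * (g (1,0) * g (2,2) - g(1,2) * g(2,0)) + g (0,2) * (g (1,0) * g (2,1) - g(1,1) * (g(2,0) :: real))"
  by (simp add: numeral_3_eq_3 det_laplace_mat det2[unfolded numeral_2_eq_2 One_nat_def] lessThan_Suc numeral_2_eq_2)
lemma det4: "det (mat 4 4 g) = (\<Sum>j<4. g (0,j) * (-1)^j * det (mat 3 3 (\<lambda>(a,b). g (Suc a, if b < j then b else Suc b)))) "
  using det_laplace_mat[of 3 g] by (simp add: numeral_eq_Suc)

lemma det4_arrow: fixes g :: "nat \<times> nat \<Rightarrow> real"
  assumes "g (1,2) = 0" "g (1,3) = 0" "g (2,1) = 0" "g (2,3) = 0" "g (3,1) = 0" "g (3,2) = 0"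
  shows "det (mat 4 4 g) = g(0,0)*g(1,1)*g(2,2)*g(3,3) - g(0,1)*g(1,0)*g(2,2)*g(3,3)
     - g(0,2)*g(2,0)*g(1,1)*g(3,3) - g(0,3)*g(3,0)*g(1,1)*g(2,2)"
  unfolding det4 det3 using assms by (simp add: lessThan_nat_numeral algebra_simps eval_nat_numeral)



lemma modc: "(a::nat) < 3*m \<Longrightarrow> a mod m = (if a < m then a else if a < 2*m then a - m else a - 2*m)"
proof -
  assume a: "a < 3*m"
  show ?thesis
  proof (cases "a < m")
    case True thus ?thesis by simp
  next
    case F1: False
    show ?thesis
    proof (cases "a < 2*m")
      case True
      hence "a mod m = (a - m) mod m" using F1 by (simp add: le_mod_geq)
      thus ?thesis using True F1 by simp
    next
      case False
      hence "a mod m = (a - m - m) mod m" using F1 by (simp add: le_mod_geq)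
      thus ?thesis using False F1 a by simp
    qed
  qed
qed

lemma Q_carrier: "carrier (Q4n n) = {0..<2*n} \<times> {0..<2}" by (simp add: Q4n_def)
lemma Q_one: "\<one>\<^bsub>Q4n n\<^esub> = (0,0)" by (simp add: Q4n_def)
lemma Q_mult: "x \<otimes>\<^bsub>Q4n n\<^esub> y = Q4n_mult n x y" by (simp add: Q4n_def)

lemma Q_mult_eval: "Q4n_mult n (i,s) (j,t) =
  ((i + (if s = 0 then j else 2*n - j) + (if s = 1 \<and> t = 1 then n else 0)) mod (2*n), (s + t) mod 2)"
  by (simp add: Q4n_mult_def)

lemma inv0: assumes "i < 2*n" shows "inv\<^bsub>Q4n n\<^esub> (i,0) = (if i = 0 then 0 else 2*n - i, 0)"
  unfolding m_inv_def Q_carrier Q_one Q_mult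
proof (rule the_equality, goal_cases)
  case 1 show ?case using assms by (auto simp: Q4n_mult_def)
next
  case (2 y)
  then obtain a b where y: "y = (a,b)" "a < 2*n" "b < 2" and e: "Q4n_mult n (i, 0) (a,b) = (0, 0)"
    by (cases y, auto)
  from e y assms show ?case
    by (auto simp: Q4n_mult_def modc split: if_splits)
qed

lemma inv1: assumes "i < 2*n" shows "inv\<^bsub>Q4n n\<^esub> (i,1) = (if i < n then i + n else i - n, 1)"
  unfolding m_inv_def Q_carrier Q_one Q_mult
proof (rule the_equality, goal_cases)
  case 1 show ?case using assms by (auto simp: Q4n_mult_def modc)
next
  case (2 y)
  then obtain a b where y: "y = (a,b)" "a < 2*n" "b < 2" and e: "Q4n_mult n (i, 1) (a,b) = (0, 0)"
    by (cases y, auto)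
  from e y assms show ?case
    by (auto simp: Q4n_mult_def modc split: if_splits)
qed



lemma m00: "i < 2*n \<Longrightarrow> j < 2*n \<Longrightarrow> Q4n_mult n (i,0) (j,0) = (if i + j < 2*n then i + j else i + j - 2*n, 0)"
  by (simp add: Q4n_mult_def modc)
lemma m01: "i < 2*n \<Longrightarrow> j < 2*n \<Longrightarrow> Q4n_mult n (i,0) (j,1) = (if i + j < 2*n then i + j else i + j - 2*n, 1)"
  by (simp add: Q4n_mult_def modc)
lemma m10: "i < 2*n \<Longrightarrow> j < 2*n \<Longrightarrow> Q4n_mult n (i,1) (j,0) = (if j \<le> i then i - j else i + 2*n - j, 1)"
  by (simp add: Q4n_mult_def modc)
lemma m11: "i < 2*n \<Longrightarrow> j < 2*n \<Longrightarrow> Q4n_mult n (i,1) (j,1) =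
   (if i + 3*n - j < 2*n then i + 3*n - j else if i + 3*n - j < 4*n then i + n - j else i - j - n, 0)"
  by (simp add: Q4n_mult_def modc; arith)
lemmas mtab = m00 m01 m10 m11 m01[unfolded One_nat_def] m10[unfolded One_nat_def] m11[unfolded One_nat_def]
lemmas itab = inv0 inv1 inv1[unfolded One_nat_def]

lemma conj_gen: "conjugate_in (Q4n n) g h \<longleftrightarrow>
   (\<exists>k s. k < 2*n \<and> s < 2 \<and> h = Q4n_mult n (Q4n_mult n (k,s) g) (inv\<^bsub>Q4n n\<^esub> (k,s)))"
  unfolding conjugate_in_def Q_carrier Q_mult by force

lemma conj0: assumes i: "i < 2*n" and c: "conjugate_in (Q4n n) (i,0) h"
  shows "\<exists>j. h = (j,0) \<and> (j = 0 \<longleftrightarrow> i = 0) \<and> (j = n \<longleftrightarrow> i = n)"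
proof -
  from c obtain k s where ks: "k < 2*n" "s < 2" and h: "h = Q4n_mult n (Q4n_mult n (k,s) (i,0)) (inv\<^bsub>Q4n n\<^esub> (k,s))"
    unfolding conj_gen by auto
  show ?thesis
  proof (cases "s = 0")
    case True
    thus ?thesis using h ks i by (auto simp: itab mtab split: if_splits)
  next
    case False
    hence "s = 1" using ks by auto
    thus ?thesis using h ks i by (auto simp: itab mtab split: if_splits)
  qed
qed

lemma conj1: assumes i: "i < 2*n" and c: "conjugate_in (Q4n n) (i,1) h"
  shows "\<exists>j. h = (j,1) \<and> (even n \<longrightarrow> (even j \<longleftrightarrow> even i))"
proof -
  from c obtain k s where ks: "k < 2*n" "s < 2" and h: "h = Q4n_mult n (Q4n_mult n (k,s) (i,1)) (inv\<^bsub>Q4n n\<^esub> (k,s))"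
    unfolding conj_gen by auto
  have s: "s = 0 \<or> s = 1" using ks by auto
  show ?thesis
  proof (cases "even n")
    case False
    show ?thesis using s h ks i False by (auto simp: itab mtab split: if_splits)
  next
    case True
    then obtain m where m: "n = 2*m" by blast
    show ?thesis using s h ks i unfolding m by (auto simp: itab mtab split: if_splits; presburger)
  qed
qed

lemma conj_refl: assumes "g \<in> carrier (Q4n n)" shows "conjugate_in (Q4n n) g g"
proof -
  obtain i s where g: "g = (i,s)" "i < 2*n" "s < 2" using assms unfolding Q_carrier by auto
  have "g = Q4n_mult n (Q4n_mult n (0,0) g) (inv\<^bsub>Q4n n\<^esub> (0,0))"
    using g by (auto simp: inv0 Q4n_mult_def)
  moreover have "0 < 2*n" using g by auto
  ultimately show ?thesis unfolding conj_gen by (intro exI[of _ 0] exI[of _ "0::nat"], simp)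
qed

lemma conj_par: assumes i: "i < 2*n" and j: "j < 2*n" and p: "even i \<longleftrightarrow> even j"
  shows "conjugate_in (Q4n n) (i,1) (j,1)"
proof -
  obtain d where d: "(i \<le> j \<and> 2*d = j - i) \<or> (j < i \<and> 2*d = j + 2*n - i)"
  proof (cases "i \<le> j")
    case True
    have "even (j - i)" using p True by auto
    then obtain d where "j - i = 2*d" by blast
    thus ?thesis using that True by auto
  next
    case False
    have "even (j + 2*n - i)" using p False by auto
    then obtain d where "j + 2*n - i = 2*d" by blast
    thus ?thesis using that False by auto
  qed
  have dl: "d < 2*n" using d i j by auto
  have "(j,1) = Q4n_mult n (Q4n_mult n (d,0) (i,1)) (inv\<^bsub>Q4n n\<^esub> (d,0))"
    using d dl i j by (auto simp: itab mtab split: if_splits)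
  thus ?thesis unfolding conj_gen using dl by (intro exI[of _ d] exI[of _ "0::nat"], simp)
qed

lemma gen_sub0: assumes "k < 2*n" shows "generate (Q4n n) {(k,0)} \<subseteq> {x. snd x = 0}"
proof
  fix x assume "x \<in> generate (Q4n n) {(k,0)}"
  thus "x \<in> {x. snd x = 0}"
  proof (induction rule: generate.induct)
    case one thus ?case by (simp add: Q_one)
  next
    case (incl h) thus ?case by auto
  next
    case (inv h) thus ?case using assms by (auto simp: inv0)
  next
    case (eng h1 h2) thus ?case by (auto simp: Q_mult Q4n_mult_def)
  qed
qed

lemma gen_sub1: assumes k: "k < 2*n" shows "generate (Q4n n) {(k,1)} \<subseteq> {(0,0),(n,0),(k,1),(if k < n then k+n else k-n, 1)}"
proof
  fix x assume "x \<in> generate (Q4n n) {(k,1)}"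
  thus "x \<in> {(0,0),(n,0),(k,1),(if k < n then k+n else k-n, 1)}"
  proof (induction rule: generate.induct)
    case one thus ?case by (simp add: Q_one)
  next
    case (incl h) thus ?case by auto
  next
    case (inv h) thus ?case using assms by (auto simp: itab)
  next
    case (eng h1 h2)
    have n: "0 < n" using k by auto
    show ?case using eng.IH k n unfolding Q_mult
      by (elim insertE; simp add: mtab; auto split: if_splits)
  qed
qed

lemma gen_a: assumes "j < 2*n" shows "(j,0) \<in> generate (Q4n n) {(1,0)}"
  using assms
proof (induction j)
  case 0 thus ?case using generate.one[of "Q4n n" "{(1,0)}"] by (simp add: Q_one)
  next
  case (Suc j)
  have "Q4n_mult n (j,0) (1,0) = (Suc j, 0)" using Suc.prems by (simp add: Q4n_mult_def)
  thus ?case using generate.eng[OF Suc.IH generate.incl[of "(1,0)"]] Suc.prems by (simp add: Q_mult)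
qed

lemma gen_b: assumes "k < 2*n" shows "(n,0) \<in> generate (Q4n n) {(k,1)}"
  and "(if k < n then k+n else k-n, 1) \<in> generate (Q4n n) {(k,1)}"
proof -
  have i: "(k,1) \<in> generate (Q4n n) {(k,1)}" by (rule generate.incl, simp)
  have "Q4n_mult n (k,1) (k,1) = (n,0)" using assms by (simp add: Q4n_mult_def modc)
  thus 1: "(n,0) \<in> generate (Q4n n) {(k,1)}" using generate.eng[OF i i] by (simp add: Q_mult)
  have "Q4n_mult n (n,0) (k,1) = (if k < n then k+n else k-n, 1)" using assms by (auto simp: Q4n_mult_def modc)
  thus "(if k < n then k+n else k-n, 1) \<in> generate (Q4n n) {(k,1)}" using generate.eng[OF 1 i] by (simp add: Q_mult)
qed


definition cen :: "nat \<Rightarrow> nat \<times> nat \<Rightarrow> bool" where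
  "cen n g \<longleftrightarrow> snd g = 0 \<and> (fst g = 0 \<or> fst g = n)"

lemma enh_imp_adj: assumes "g \<in> carrier (Q4n n)" "h \<in> carrier (Q4n n)" "g \<noteq> h"
  and "enh_power_adj (Q4n n) g h" shows "conj_super_enh_adj (Q4n n) g h"
  using assms conj_refl unfolding conj_super_enh_adj_def by blast

lemma conj_imp_adj: assumes "g \<in> carrier (Q4n n)" "h \<in> carrier (Q4n n)" "g \<noteq> h"
  and "conjugate_in (Q4n n) g h" shows "conj_super_enh_adj (Q4n n) g h"
  using assms unfolding conj_super_enh_adj_def by blast

lemma enh_by: assumes "g \<in> carrier (Q4n n)" "h \<in> carrier (Q4n n)" "g \<noteq> h" "c \<in> carrier (Q4n n)"
  "g \<in> generate (Q4n n) {c}" "h \<in> generate (Q4n n) {c}" shows "enh_power_adj (Q4n n) g h"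
  using assms unfolding enh_power_adj_def by blast

lemma gen_one: "(0,0) \<in> generate (Q4n n) {c}"
  using generate.one[of "Q4n n" "{c}"] by (simp add: Q_one)

lemma gen_self: "c \<in> generate (Q4n n) {c}" by (rule generate.incl, simp)

lemma enh_sym: "enh_power_adj G g h \<Longrightarrow> enh_power_adj G h g"
  unfolding enh_power_adj_def by blast

lemma enh_cen: assumes n: "n \<ge> 1" and g: "g \<in> carrier (Q4n n)" and h: "h \<in> carrier (Q4n n)" and gh: "g \<noteq> h"
  and c: "cen n g" shows "enh_power_adj (Q4n n) g h"
proof -
  obtain j t where ht: "h = (j,t)" "j < 2*n" "t < 2" using h unfolding Q_carrier by auto
  have g0: "g = (0,0) \<or> g = (n,0)" using c unfolding cen_def by (cases g, auto)
  have c1: "(1,0) \<in> carrier (Q4n n)" using n unfolding Q_carrier by auto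
  show "enh_power_adj (Q4n n) g h"
  proof (cases "t = 0")
    case True
    show ?thesis
      by (rule enh_by[OF g h gh c1], insert g0 n ht True gen_a, auto)
  next
    case False
    hence t: "t = 1" using ht by auto
    show ?thesis
      by (rule enh_by[OF g h gh h], insert g0 ht t gen_one gen_b(1)[of j n] gen_self, auto)
  qed
qed

lemma E_char: assumes n: "n \<ge> 1" and g: "g \<in> carrier (Q4n n)" and h: "h \<in> carrier (Q4n n)"
  shows "conj_super_enh_adj (Q4n n) g h \<longleftrightarrow> g \<noteq> h \<and> (cen n g \<or> cen n h \<or> (snd g = 0 \<and> snd h = 0) \<or>
     (snd g = 1 \<and> snd h = 1 \<and> (odd n \<or> (even (fst g) \<longleftrightarrow> even (fst h)))))" (is "?L \<longleftrightarrow> ?R")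
proof
  assume R: ?R
  hence gh: "g \<noteq> h" by simp
  obtain i s where gs: "g = (i,s)" "i < 2*n" "s < 2" using g unfolding Q_carrier by auto
  obtain j t where ht: "h = (j,t)" "j < 2*n" "t < 2" using h unfolding Q_carrier by auto
  have c1: "(1,0) \<in> carrier (Q4n n)" using n unfolding Q_carrier by auto
  show ?L
  proof (cases "cen n g \<or> cen n h")
    case True
    hence "enh_power_adj (Q4n n) g h" using enh_cen[OF n g h gh] enh_cen[OF n h g] gh enh_sym by metis
    thus ?thesis using enh_imp_adj[OF g h gh] by blast
  next
    case False
    hence R': "(s = 0 \<and> t = 0) \<or> (s = 1 \<and> t = 1 \<and> (odd n \<or> (even i \<longleftrightarrow> even j)))" using R gs ht by auto
    show ?thesis
    proof (cases "s = 0")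
      case True
      hence "enh_power_adj (Q4n n) g h"
        by (intro enh_by[OF g h gh c1], insert R' gs ht gen_a, auto)
      thus ?thesis using enh_imp_adj[OF g h gh] by blast
    next
      case False
      hence st: "s = 1" "t = 1" using R' by auto
      show ?thesis
      proof (cases "even i \<longleftrightarrow> even j")
        case True
        thus ?thesis using conj_imp_adj[OF g h gh] conj_par[OF gs(2) ht(2) True] gs ht st by simp
      next
        case False
        hence on: "odd n" using R' st by auto
        define h' where "h' = (if i < n then i + n else i - n, 1::nat)"
        have h'c: "h' \<in> carrier (Q4n n)" using gs unfolding h'_def Q_carrier by auto
        have gh': "g \<noteq> h'" using gs st n unfolding h'_def by auto
        have "conjugate_in (Q4n n) h h'" unfolding h'_def ht st
          by (rule conj_par, insert gs ht on False, auto)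
        moreover have "enh_power_adj (Q4n n) g h'"
          by (rule enh_by[OF g h'c gh' g], insert gs st gen_self gen_b(2)[of i n], auto simp: h'_def)
        ultimately show ?thesis using conj_refl[OF g] gh g h unfolding conj_super_enh_adj_def by blast
      qed
    qed
  qed
next
  assume L: ?L
  hence gh: "g \<noteq> h" unfolding conj_super_enh_adj_def by simp
  obtain i s where gs: "g = (i,s)" "i < 2*n" "s < 2" using g unfolding Q_carrier by auto
  obtain j t where ht: "h = (j,t)" "j < 2*n" "t < 2" using h unfolding Q_carrier by auto
  show ?R
  proof (rule ccontr)
    assume nR: "\<not> ?R"
    have cases: "(s = 0 \<and> \<not> cen n g \<and> t = 1) \<or> (s = 1 \<and> t = 0 \<and> \<not> cen n h) \<or>
       (s = 1 \<and> t = 1 \<and> even n \<and> (even i \<noteq> even j))"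
      using nR gh gs ht by (auto simp: cen_def)
    have ncen: "\<not> cen n (a,1)" for a by (simp add: cen_def)
    have gen_c: "c \<in> carrier (Q4n n) \<Longrightarrow> x \<in> generate (Q4n n) {c} \<Longrightarrow> y \<in> generate (Q4n n) {c} \<Longrightarrow>
      snd x = 1 \<Longrightarrow> (\<exists>k. k < 2*n \<and> c = (k,1) \<and> y \<in> {(0,0),(n,0),(k,1),(if k < n then k+n else k-n, 1)}
         \<and> x \<in> {(k,1),(if k < n then k+n else k-n, 1)})" for c x y
    proof -
      assume c: "c \<in> carrier (Q4n n)" and x: "x \<in> generate (Q4n n) {c}" and y: "y \<in> generate (Q4n n) {c}"
        and sx: "snd x = 1"
      obtain k r where kr: "c = (k,r)" "k < 2*n" "r < 2" using c unfolding Q_carrier by auto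
      show ?thesis
      proof (cases "r = 0")
        case True
        thus ?thesis using gen_sub0[OF kr(2)] x sx kr by auto
      next
        case False
        hence "r = 1" using kr by auto
        thus ?thesis using gen_sub1[OF kr(2)] x y sx kr by auto
      qed
    qed
    from L have "conjugate_in (Q4n n) g h \<or> (\<exists>g' h'. conjugate_in (Q4n n) g g' \<and> conjugate_in (Q4n n) h h' \<and> enh_power_adj (Q4n n) g' h')"
      unfolding conj_super_enh_adj_def by blast
    thus False
    proof
      assume cj: "conjugate_in (Q4n n) g h"
      from cases show False
      proof (elim disjE)
        assume "s = 0 \<and> \<not> cen n g \<and> t = 1" thus False using conj0[OF gs(2)] cj gs ht by auto
      next
        assume "s = 1 \<and> t = 0 \<and> \<not> cen n h" thus False using conj1[OF gs(2)] cj gs ht by auto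
      next
        assume "s = 1 \<and> t = 1 \<and> even n \<and> (even i \<noteq> even j)" thus False using conj1[OF gs(2)] cj gs ht by auto
      qed
    next
      assume "\<exists>g' h'. conjugate_in (Q4n n) g g' \<and> conjugate_in (Q4n n) h h' \<and> enh_power_adj (Q4n n) g' h'"
      then obtain g' h' c where cg: "conjugate_in (Q4n n) g g'" and ch: "conjugate_in (Q4n n) h h'"
        and c: "c \<in> carrier (Q4n n)" and g'c: "g' \<in> generate (Q4n n) {c}" and h'c: "h' \<in> generate (Q4n n) {c}"
        unfolding enh_power_adj_def by blast
      from cases show False
      proof (elim disjE)
        assume a: "s = 0 \<and> \<not> cen n g \<and> t = 1"
        have "conjugate_in (Q4n n) (i,0) g'" using cg gs a by simp
        from conj0[OF gs(2) this] obtain a where g': "g' = (a,0)" "a \<noteq> 0" "a \<noteq> n" using gs a by (auto simp: cen_def)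
        have "conjugate_in (Q4n n) (j,1) h'" using ch ht a by simp
        from conj1[OF ht(2) this] obtain b where h': "h' = (b,1)" by auto
        show False using gen_c[OF c h'c g'c] g' h' by auto
      next
        assume a: "s = 1 \<and> t = 0 \<and> \<not> cen n h"
        have "conjugate_in (Q4n n) (j,0) h'" using ch ht a by simp
        from conj0[OF ht(2) this] obtain a where h': "h' = (a,0)" "a \<noteq> 0" "a \<noteq> n" using ht a by (auto simp: cen_def)
        have "conjugate_in (Q4n n) (i,1) g'" using cg gs a by simp
        from conj1[OF gs(2) this] obtain b where g': "g' = (b,1)" by auto
        show False using gen_c[OF c g'c h'c] g' h' by auto
      next
        assume a: "s = 1 \<and> t = 1 \<and> even n \<and> (even i \<noteq> even j)"
        have "conjugate_in (Q4n n) (i,1) g'" using cg gs a by simp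
        from conj1[OF gs(2) this] obtain a where g': "g' = (a,1)" "even a \<longleftrightarrow> even i" using a by auto
        have "conjugate_in (Q4n n) (j,1) h'" using ch ht a by simp
        from conj1[OF ht(2) this] obtain b where h': "h' = (b,1)" "even b \<longleftrightarrow> even j" using a by auto
        obtain k where k: "k < 2*n" "h' \<in> {(0,0),(n,0),(k,1),(if k < n then k+n else k-n, 1)}"
           "g' \<in> {(k,1),(if k < n then k+n else k-n, 1)}"
          using gen_c[OF c g'c h'c] g' by auto
        from a obtain m where m: "n = 2*m" by blast
        show False using k g' h' a unfolding m by (auto split: if_splits; presburger)
      qed
    qed
  qed
qed



definition cls :: "nat \<Rightarrow> nat \<Rightarrow> nat" where
  "cls n u = (if u = 0 \<or> u = n then 0 else if u < 2*n then 1 else if odd n \<or> even u then 2 else 3)"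

definition dg :: "nat \<Rightarrow> nat \<Rightarrow> nat" where
  "dg n c = (if c = 0 then 4*n - 1 else if c = 1 then 2*n - 1 else if odd n then 2*n + 1 else n + 1)"

definition sz :: "nat \<Rightarrow> nat \<Rightarrow> nat" where
  "sz n c = card {v. v < 4*n \<and> cls n v = c}"

lemma enum_lt: assumes "u < 4*n" shows "Q4n_enum n u = (if u < 2*n then (u,0) else (u - 2*n, 1))"
proof (cases "u < 2*n")
  case True thus ?thesis by (simp add: Q4n_enum_def)
next
  case False
  have "u mod (2*n) = u - 2*n" using False assms by (simp add: modc)
  moreover have "u div (2*n) = 1" using False assms
    by (simp add: le_div_geq[of "2*n" u] div_less)
  ultimately show ?thesis using False by (simp add: Q4n_enum_def)
qed

lemma enum_carrier: "u < 4*n \<Longrightarrow> Q4n_enum n u \<in> carrier (Q4n n)"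
  by (auto simp: enum_lt Q_carrier)

lemma enum_inj: "inj_on (Q4n_enum n) {..<4*n}"
  by (rule inj_onI, auto simp: enum_lt split: if_splits)

lemma enum_surj: "carrier (Q4n n) = Q4n_enum n ` {..<4*n}"
proof
  show "Q4n_enum n ` {..<4*n} \<subseteq> carrier (Q4n n)" using enum_carrier by auto
next
  show "carrier (Q4n n) \<subseteq> Q4n_enum n ` {..<4*n}"
  proof
    fix g assume "g \<in> carrier (Q4n n)"
    then obtain i s where g: "g = (i,s)" "i < 2*n" "s < 2" unfolding Q_carrier by auto
    show "g \<in> Q4n_enum n ` {..<4*n}"
    proof (cases "s = 0")
      case True
      hence "g = Q4n_enum n i" using g by (simp add: enum_lt)
      thus ?thesis using g by auto
    next
      case False
      hence "g = Q4n_enum n (i + 2*n)" using g by (simp add: enum_lt)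
      thus ?thesis using g by auto
    qed
  qed
qed

lemma adj_idx: assumes n: "n \<ge> 1" and u: "u < 4*n" and v: "v < 4*n"
  shows "conj_super_enh_adj (Q4n n) (Q4n_enum n u) (Q4n_enum n v) \<longleftrightarrow>
    u \<noteq> v \<and> (cls n u = 0 \<or> cls n v = 0 \<or> cls n u = cls n v)"
proof -
  have ne: "Q4n_enum n u \<noteq> Q4n_enum n v \<longleftrightarrow> u \<noteq> v"
    using enum_inj[of n] u v unfolding inj_on_def by auto
  have cu: "cen n (Q4n_enum n u) \<longleftrightarrow> cls n u = 0" using u n by (auto simp: cen_def cls_def enum_lt)
  have cv: "cen n (Q4n_enum n v) \<longleftrightarrow> cls n v = 0" using v n by (auto simp: cen_def cls_def enum_lt)
  have pu: "u \<ge> 2*n \<Longrightarrow> even (u - 2*n) \<longleftrightarrow> even u" using u by presburger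
  have pv: "v \<ge> 2*n \<Longrightarrow> even (v - 2*n) \<longleftrightarrow> even v" using v by presburger
  show ?thesis
    unfolding E_char[OF n enum_carrier[OF u] enum_carrier[OF v]] ne cu cv
    using u v pu pv by (auto simp: enum_lt cls_def split: if_splits)
qed

lemma deg_idx: assumes n: "n \<ge> 1" and u: "u < 4*n"
  shows "graph_deg (carrier (Q4n n)) (conj_super_enh_adj (Q4n n)) (Q4n_enum n u)
    = card {v. v < 4*n \<and> v \<noteq> u \<and> (cls n u = 0 \<or> cls n v = 0 \<or> cls n u = cls n v)}"
proof -
  have "{w \<in> carrier (Q4n n). conj_super_enh_adj (Q4n n) (Q4n_enum n u) w}
     = Q4n_enum n ` {v. v < 4*n \<and> v \<noteq> u \<and> (cls n u = 0 \<or> cls n v = 0 \<or> cls n u = cls n v)}"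
    unfolding enum_surj using adj_idx[OF n u] by auto
  moreover have "inj_on (Q4n_enum n) {v. v < 4*n \<and> v \<noteq> u \<and> (cls n u = 0 \<or> cls n v = 0 \<or> cls n u = cls n v)}"
    by (rule inj_on_subset[OF enum_inj], auto)
  ultimately show ?thesis unfolding graph_deg_def by (simp add: card_image)
qed

lemma cls0: "n \<ge> 1 \<Longrightarrow> {v. v < 4*n \<and> cls n v = 0} = {0, n}"
  by (auto simp: cls_def)
lemma cls1: "{v. v < 4*n \<and> cls n v = 1} = {1..<2*n} - {n}"
  by (auto simp: cls_def)
lemma cls2o: "odd n \<Longrightarrow> {v. v < 4*n \<and> cls n v = 2} = {2*n..<4*n}"
  by (auto simp: cls_def)
lemma cls3o: "odd n \<Longrightarrow> {v. v < 4*n \<and> cls n v = 3} = {}"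
  by (auto simp: cls_def)
lemma cls2e: assumes "even n" shows "{v. v < 4*n \<and> cls n v = 2} = (\<lambda>t. 2*t) ` {n..<2*n}"
proof
  show "{v. v < 4*n \<and> cls n v = 2} \<subseteq> (\<lambda>t. 2*t) ` {n..<2*n}"
  proof
    fix v assume "v \<in> {v. v < 4*n \<and> cls n v = 2}"
    hence v: "v < 4*n" "2*n \<le> v" "even v" using assms by (auto simp: cls_def split: if_splits)
    then obtain t where "v = 2*t" by blast
    thus "v \<in> (\<lambda>t. 2*t) ` {n..<2*n}" using v by auto
  qed
qed (use assms in \<open>auto simp: cls_def\<close>)
lemma cls3e: assumes "even n" shows "{v. v < 4*n \<and> cls n v = 3} = (\<lambda>t. 2*t+1) ` {n..<2*n}"
proof
  show "{v. v < 4*n \<and> cls n v = 3} \<subseteq> (\<lambda>t. 2*t+1) ` {n..<2*n}"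
  proof
    fix v assume "v \<in> {v. v < 4*n \<and> cls n v = 3}"
    hence v: "v < 4*n" "2*n \<le> v" "odd v" using assms by (auto simp: cls_def split: if_splits)
    then obtain t where "v = 2*t+1" using oddE by blast
    thus "v \<in> (\<lambda>t. 2*t+1) ` {n..<2*n}" using v by auto
  qed
qed (use assms in \<open>auto simp: cls_def\<close>)

lemma sz0: "n \<ge> 1 \<Longrightarrow> sz n 0 = 2" unfolding sz_def by (simp add: cls0)
lemma sz1: "n \<ge> 1 \<Longrightarrow> sz n 1 = 2*n - 2" unfolding sz_def cls1 by (subst card_Diff_singleton, auto)
lemma sz1': "n \<ge> 1 \<Longrightarrow> sz n (Suc 0) = 2*n - 2" using sz1 by simp
lemma sz2o: "odd n \<Longrightarrow> sz n 2 = 2*n" unfolding sz_def by (simp add: cls2o)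
lemma sz3o: "odd n \<Longrightarrow> sz n 3 = 0" unfolding sz_def by (simp add: cls3o)
lemma sz2e: "even n \<Longrightarrow> sz n 2 = n" unfolding sz_def cls2e
  by (subst card_image, auto simp: inj_on_def)
lemma sz3e: "even n \<Longrightarrow> sz n 3 = n" unfolding sz_def cls3e
  by (subst card_image, auto simp: inj_on_def)

lemma cls_lt: "cls n u < 4" "odd n \<Longrightarrow> cls n u < 3" by (auto simp: cls_def)

lemma nbr_card: assumes n: "n \<ge> 1" and u: "u < 4*n"
  shows "card {v. v < 4*n \<and> v \<noteq> u \<and> (cls n u = 0 \<or> cls n v = 0 \<or> cls n u = cls n v)} = dg n (cls n u)"
proof (cases "cls n u = 0")
  case True
  have "{v. v < 4*n \<and> v \<noteq> u \<and> (cls n u = 0 \<or> cls n v = 0 \<or> cls n u = cls n v)} = {..<4*n} - {u}"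
    using True by auto
  thus ?thesis using True u by (simp add: dg_def)
next
  case False
  let ?A = "{v. v < 4*n \<and> cls n v = 0}" and ?B = "{v. v < 4*n \<and> cls n v = cls n u}"
  have e: "{v. v < 4*n \<and> v \<noteq> u \<and> (cls n u = 0 \<or> cls n v = 0 \<or> cls n u = cls n v)} = (?A \<union> ?B) - {u}"
    using False by auto
  have "card ((?A \<union> ?B) - {u}) = card (?A \<union> ?B) - 1" using u by (subst card_Diff_singleton, auto)
  also have "card (?A \<union> ?B) = card ?A + card ?B" using False by (subst card_Un_disjoint, auto)
  also have "card ?A = 2" using sz0[OF n] unfolding sz_def .
  also have "card ?B = sz n (cls n u)" unfolding sz_def ..
  finally have c: "card {v. v < 4*n \<and> v \<noteq> u \<and> (cls n u = 0 \<or> cls n v = 0 \<or> cls n u = cls n v)} = 2 + sz n (cls n u) - 1"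
    using e by simp
  have "cls n u = 1 \<or> cls n u = 2 \<or> cls n u = 3" using False cls_lt(1)[of n u] by auto
  thus ?thesis unfolding c using n False
    by (cases "odd n") (auto simp: dg_def sz1 sz1' sz2o sz3o sz2e sz3e cls3o[unfolded sz_def] dest: cls_lt(2)[of n u])
qed

definition W :: "nat \<Rightarrow> nat \<Rightarrow> nat \<Rightarrow> real" where
  "W n i j = (if i = 0 \<or> j = 0 \<or> i = j then sqrt (real (dg n i)^2 + real (dg n j)^2) else 0)"

lemma S_carrier: "sombor_matrix N vs V E \<in> carrier_mat N N" by (simp add: sombor_matrix_def)

lemma S_eq: assumes n: "n \<ge> 1"
  shows "- char_matrix (sombor_matrix (4*n) (Q4n_enum n) (carrier (Q4n n)) (conj_super_enh_adj (Q4n n))) x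
    = mat (4*n) (4*n) (\<lambda>(u,v). (if u = v then x else 0) - (if u = v then 0 else W n (cls n u) (cls n v)))"
proof (rule eq_matI)
  fix u v assume "u < dim_row (mat (4*n) (4*n) (\<lambda>(u,v). (if u = v then x else 0) - (if u = v then 0 else W n (cls n u) (cls n v))))"
     "v < dim_col (mat (4*n) (4*n) (\<lambda>(u,v). (if u = v then x else 0) - (if u = v then 0 else W n (cls n u) (cls n v))))"
  hence u: "u < 4*n" and v: "v < 4*n" by auto
  have du: "graph_deg (carrier (Q4n n)) (conj_super_enh_adj (Q4n n)) (Q4n_enum n u) = dg n (cls n u)"
    using deg_idx[OF n u] nbr_card[OF n u] by simp
  have dv: "graph_deg (carrier (Q4n n)) (conj_super_enh_adj (Q4n n)) (Q4n_enum n v) = dg n (cls n v)"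
    using deg_idx[OF n v] nbr_card[OF n v] by simp
  show "(- char_matrix (sombor_matrix (4*n) (Q4n_enum n) (carrier (Q4n n)) (conj_super_enh_adj (Q4n n))) x) $$ (u,v)
     = mat (4*n) (4*n) (\<lambda>(u,v). (if u = v then x else 0) - (if u = v then 0 else W n (cls n u) (cls n v))) $$ (u,v)"
    using u v du dv adj_idx[OF n u v]
    by (auto simp: char_matrix_def sombor_matrix_def W_def)
qed (auto simp: char_matrix_def sombor_matrix_def)



declare One_nat_def [simp del]

lemma poly_eq_cofinite: fixes p q :: "real poly"
  assumes F: "finite F" and e: "\<And>x. x \<notin> F \<Longrightarrow> poly p x = poly q x" shows "p = q"
proof (rule ccontr)
  assume "p \<noteq> q"
  hence "p - q \<noteq> 0" by simp
  hence "finite {x. poly (p - q) x = 0}" by (rule poly_roots_finite)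
  moreover have "- F \<subseteq> {x. poly (p - q) x = 0}" using e by auto
  ultimately have "finite (- F)" by (rule finite_subset[rotated])
  with F have "finite (UNIV :: real set)" by (metis Compl_partition2 finite_Un)
  thus False using infinite_UNIV_char_0 by blast
qed

lemma s2s: "sqrt 2 * sqrt 2 = (2::real)" "sqrt 2 * (sqrt 2 * a) = 2 * (a::real)"
  by (simp_all add: mult.assoc[symmetric])

lemma prod_cls: fixes f :: "nat \<Rightarrow> real" and N k :: nat and cl :: "nat \<Rightarrow> nat"
  assumes "\<And>u. u < N \<Longrightarrow> cl u < k"
  shows "(\<Prod>u<N. f (cl u)) = (\<Prod>c<k. f c ^ card {u. u < N \<and> cl u = c})"
proof -
  have "(\<Prod>u<N. f (cl u)) = (\<Prod>c<k. \<Prod>u\<in>{u \<in> {..<N}. cl u = c}. f (cl u))"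
  proof -
    have sub: "cl ` {..<N} \<subseteq> {..<k}" using assms by auto
    have "(\<Prod>c<k. \<Prod>u\<in>{u \<in> {..<N}. cl u = c}. f (cl u)) = (\<Prod>u<N. f (cl u))"
      by (rule prod.group[OF finite_lessThan[of N] finite_lessThan[of k] sub])
    thus ?thesis by simp
  qed
  also have "\<dots> = (\<Prod>c<k. f c ^ card {u. u < N \<and> cl u = c})"
  proof (rule prod.cong[OF refl])
    fix c
    have "(\<Prod>u\<in>{u \<in> {..<N}. cl u = c}. f (cl u)) = (\<Prod>u\<in>{u. u < N \<and> cl u = c}. f c)"
      by (rule prod.cong, auto)
    thus "(\<Prod>u\<in>{u \<in> {..<N}. cl u = c}. f (cl u)) = f c ^ card {u. u < N \<and> cl u = c}" by simp
  qed
  finally show ?thesis .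
qed

lemma prod3: "(\<Prod>c<(3::nat). g c) = g 0 * g 1 * (g 2 :: real)"
  by (simp add: lessThan_nat_numeral ac_simps lessThan_Suc One_nat_def)
lemma prod4: "(\<Prod>c<(4::nat). g c) = g 0 * g 1 * g 2 * (g 3 :: real)"
  by (simp add: lessThan_nat_numeral ac_simps lessThan_Suc One_nat_def)

lemma sqrt_sq2: "a \<ge> 0 \<Longrightarrow> sqrt (a^2 + a^2) = a * sqrt 2"
proof -
  assume a: "a \<ge> 0"
  have "a^2 + a^2 = 2 * a^2" by simp
  thus ?thesis using a by (simp add: real_sqrt_mult mult.commute)
qed

lemma Wdiag: "W n c c = real (dg n c) * sqrt 2"
  by (simp add: W_def real_sqrt_mult mult.commute)

lemma sqrt_sqr: "sqrt (a::real) * sqrt a = a" if "a \<ge> 0" using that by simp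

lemma charpoly_S: assumes n: "n \<ge> 1"
  shows "poly (char_poly (sombor_matrix (4*n) (Q4n_enum n) (carrier (Q4n n)) (conj_super_enh_adj (Q4n n)))) x
   = det (mat (4*n) (4*n) (\<lambda>(u,v). (if u = v then x else 0) - (if u = v then 0 else W n (cls n u) (cls n v))))"
  by (subst char_poly_matrix[OF S_carrier], subst S_eq[OF n], rule refl)

lemma W_facts: assumes n: "n \<ge> 1"
  shows "W n 0 0 = (4 * real n - 1) * sqrt 2"
    "W n 1 1 = (2 * real n - 1) * sqrt 2"
    "odd n \<Longrightarrow> W n 2 2 = (2 * real n + 1) * sqrt 2"
    "even n \<Longrightarrow> W n 2 2 = (real n + 1) * sqrt 2"
    "even n \<Longrightarrow> W n 3 3 = (real n + 1) * sqrt 2"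
    "W n 1 0 = W n 0 1" "W n 2 0 = W n 0 2" "W n 3 0 = W n 0 3"
    "W n 1 2 = 0" "W n 2 1 = 0" "W n 1 3 = 0" "W n 3 1 = 0" "W n 2 3 = 0" "W n 3 2 = 0"
    "W n 0 1 * W n 0 1 = (4 * real n - 1)^2 + (2 * real n - 1)^2"
    "odd n \<Longrightarrow> W n 0 2 * W n 0 2 = (4 * real n - 1)^2 + (2 * real n + 1)^2"
    "even n \<Longrightarrow> W n 0 2 * W n 0 2 = (4 * real n - 1)^2 + (real n + 1)^2"
    "even n \<Longrightarrow> W n 0 3 * W n 0 3 = (4 * real n - 1)^2 + (real n + 1)^2"
proof -
  have r0: "real (dg n 0) = 4 * real n - 1" using n by (simp add: dg_def of_nat_diff)
  have r1: "real (dg n 1) = 2 * real n - 1" using n by (simp add: dg_def of_nat_diff)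
  have r2o: "odd n \<Longrightarrow> real (dg n 2) = 2 * real n + 1" by (simp add: dg_def)
  have r2e: "even n \<Longrightarrow> real (dg n 2) = real n + 1" by (simp add: dg_def)
  have r3e: "even n \<Longrightarrow> real (dg n 3) = real n + 1" by (simp add: dg_def)
  have p0: "4 * real n - 1 \<ge> 0" "2 * real n - 1 \<ge> 0" using n by auto
  show "W n 0 0 = (4 * real n - 1) * sqrt 2" unfolding Wdiag r0 ..
  show "W n 1 1 = (2 * real n - 1) * sqrt 2" unfolding Wdiag r1 ..
  show "odd n \<Longrightarrow> W n 2 2 = (2 * real n + 1) * sqrt 2" unfolding Wdiag using r2o by simp
  show "even n \<Longrightarrow> W n 2 2 = (real n + 1) * sqrt 2" unfolding Wdiag using r2e by simp
  show "even n \<Longrightarrow> W n 3 3 = (real n + 1) * sqrt 2" unfolding Wdiag using r3e by simp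
  show "W n 1 0 = W n 0 1" "W n 2 0 = W n 0 2" "W n 3 0 = W n 0 3" unfolding W_def by (simp_all add: add.commute)
  show "W n 1 2 = 0" "W n 2 1 = 0" "W n 1 3 = 0" "W n 3 1 = 0" "W n 2 3 = 0" "W n 3 2 = 0" unfolding W_def by simp_all
  show "W n 0 1 * W n 0 1 = (4 * real n - 1)^2 + (2 * real n - 1)^2" unfolding W_def r0 r1
    by (simp add: sqrt_sqr)
  show "odd n \<Longrightarrow> W n 0 2 * W n 0 2 = (4 * real n - 1)^2 + (2 * real n + 1)^2" unfolding W_def r0
    using r2o by (simp add: sqrt_sqr)
  show "even n \<Longrightarrow> W n 0 2 * W n 0 2 = (4 * real n - 1)^2 + (real n + 1)^2" unfolding W_def r0
    using r2e by (simp add: sqrt_sqr)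
  show "even n \<Longrightarrow> W n 0 3 * W n 0 3 = (4 * real n - 1)^2 + (real n + 1)^2" unfolding W_def r0
    using r3e by (simp add: sqrt_sqr)
qed


lemma odd_case: assumes n2: "n \<ge> 2" and on: "odd n"
  shows "char_poly (sombor_matrix (4*n) (Q4n_enum n) (carrier (Q4n n)) (conj_super_enh_adj (Q4n n))) =
     [:- (- (4 * real n - 1) * sqrt 2), 1:] * [:- (- (2 * real n - 1) * sqrt 2), 1:] ^ (2*n - 3)
     * [:- (- (2 * real n + 1) * sqrt 2), 1:] ^ (2*n - 1)
     * ([:- (4 * real n - 1) * sqrt 2, 1:]
                     * [:- (2 * real n - 1) * (2 * real n - 3) * sqrt 2, 1:]
                     * [:- (2 * real n - 1) * (2 * real n + 1) * sqrt 2, 1:]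
                   - [: 8 * (real n - 1) * (10 * real n ^ 2 - 6 * real n + 1) :]
                     * [:- (2 * real n - 1) * (2 * real n + 1) * sqrt 2, 1:]
                   - [: 8 * real n * (10 * real n ^ 2 - 2 * real n + 1) :]
                     * [:- (2 * real n - 1) * (2 * real n - 3) * sqrt 2, 1:])"
  (is "char_poly ?S = ?T")
proof (rule poly_eq_cofinite[of "{- W n 0 0, - W n 1 1, - W n 2 2}"])
  fix x assume x: "x \<notin> {- W n 0 0, - W n 1 1, - W n 2 2}"
  have n: "n \<ge> 1" using n2 by auto
  define d where "d c = x + W n c c" for c
  have dnz: "d j \<noteq> 0" if "j < 3" for j
  proof -
    have "j = 0 \<or> j = 1 \<or> j = 2" using that by auto
    thus ?thesis using x unfolding d_def by (auto simp: add_eq_0_iff)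
  qed
  let ?M = "mat (4*n) (4*n) (\<lambda>(u,v). (if u = v then x else 0) - (if u = v then 0 else W n (cls n u) (cls n v)))"
  let ?Q = "mat 3 3 (\<lambda>(i,j). (if i = j then x + W n i i else 0) - W n i j * real (card {u. u < 4*n \<and> cls n u = j}))"
  have cd: "det ?M * (\<Prod>j<3. x + W n j j) = (\<Prod>u<4*n. x + W n (cls n u) (cls n u)) * det ?Q"
    by (rule class_det, insert dnz cls_lt(2)[OF on], auto simp: d_def)
  have p1: "(\<Prod>u<4*n. x + W n (cls n u) (cls n u)) = (\<Prod>c<3. d c ^ sz n c)"
    unfolding d_def sz_def by (rule prod_cls[of "4*n" "cls n" 3 "\<lambda>c. x + W n c c"], rule cls_lt(2)[OF on])
  have s1: "real (sz n 1) = 2 * real n - 2"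
  proof -
    have "sz n 1 = 2*n - 2" by (rule sz1[OF n])
    moreover have "2 \<le> 2*n" using n by simp
    ultimately show ?thesis by (simp add: of_nat_diff)
  qed
  have s2: "real (sz n 2) = 2 * real n" using on by (simp add: sz2o)
  have e1: "2*n - 2 = Suc (2*n - 3)" and e2: "2*n = Suc (2*n - 1)" using n2 by auto
  have q1: "d 1 ^ (2*n-2) = d 1 * d 1 ^ (2*n-3)" by (subst e1, simp)
  have q2: "d 2 ^ (2*n) = d 2 * d 2 ^ (2*n-1)" by (subst e2, simp)
  have p1': "(\<Prod>c<3. d c ^ sz n c) = (d 0 * d 1 * d 2) * (d 0 * d 1 ^ (2*n - 3) * d 2 ^ (2*n - 1))"
    unfolding prod3 sz0[OF n] sz1[OF n] sz2o[OF on] q1 q2 by (simp add: power2_eq_square ac_simps)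
  have p2: "(\<Prod>j<3. x + W n j j) = d 0 * d 1 * d 2"
    unfolding prod3 d_def ..
  have nz: "d 0 * d 1 * d 2 \<noteq> 0" using dnz[of 0] dnz[of 1] dnz[of 2] by auto
  have dM: "det ?M = d 0 * d 1 ^ (2*n - 3) * d 2 ^ (2*n - 1) * det ?Q"
    using cd unfolding p1 p1' p2 using nz by (simp add: ac_simps)
  have dQ: "det ?Q = poly ([:- (4 * real n - 1) * sqrt 2, 1:]
                     * [:- (2 * real n - 1) * (2 * real n - 3) * sqrt 2, 1:]
                     * [:- (2 * real n - 1) * (2 * real n + 1) * sqrt 2, 1:]
                   - [: 8 * (real n - 1) * (10 * real n ^ 2 - 6 * real n + 1) :]
                     * [:- (2 * real n - 1) * (2 * real n + 1) * sqrt 2, 1:]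
                   - [: 8 * real n * (10 * real n ^ 2 - 2 * real n + 1) :]
                     * [:- (2 * real n - 1) * (2 * real n - 3) * sqrt 2, 1:]) x"
  proof -
    have sd: "card {u. u < 4*n \<and> cls n u = c} = sz n c" for c unfolding sz_def ..
    define w1 where "w1 = W n 0 1"
    define w2 where "w2 = W n 0 2"
    have ww1: "w1 * w1 = (4 * real n - 1)^2 + (2 * real n - 1)^2" unfolding w1_def by (rule W_facts(15)[OF n])
    have ww2: "w2 * w2 = (4 * real n - 1)^2 + (2 * real n + 1)^2" unfolding w2_def by (rule W_facts(16)[OF n on])
    have "det ?Q = (x - (4 * real n - 1) * sqrt 2) * ((x - (2 * real n - 1) * (2 * real n - 3) * sqrt 2) * (x - (2 * real n - 1) * (2 * real n + 1) * sqrt 2))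
       - (w1 * w1) * (2 * (2 * real n - 2)) * (x - (2 * real n - 1) * (2 * real n + 1) * sqrt 2)
       - (w2 * w2) * (2 * (2 * real n)) * (x - (2 * real n - 1) * (2 * real n - 3) * sqrt 2)"
      unfolding det3 sd
      by (simp add: W_facts(1,2,6-14)[OF n] W_facts(3)[OF n on] s1 s2 sz0[OF n] w1_def[symmetric] w2_def[symmetric] algebra_simps s2s)
    also have "\<dots> = poly ([:- (4 * real n - 1) * sqrt 2, 1:]
                     * [:- (2 * real n - 1) * (2 * real n - 3) * sqrt 2, 1:]
                     * [:- (2 * real n - 1) * (2 * real n + 1) * sqrt 2, 1:]
                   - [: 8 * (real n - 1) * (10 * real n ^ 2 - 6 * real n + 1) :]
                     * [:- (2 * real n - 1) * (2 * real n + 1) * sqrt 2, 1:]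
                   - [: 8 * real n * (10 * real n ^ 2 - 2 * real n + 1) :]
                     * [:- (2 * real n - 1) * (2 * real n - 3) * sqrt 2, 1:]) x"
      unfolding ww1 ww2 by (simp add: algebra_simps power2_eq_square s2s)
    finally show ?thesis .
  qed
  have "poly (char_poly ?S) x = det ?M" by (rule charpoly_S[OF n])
  also have "\<dots> = poly ?T x" unfolding dM dQ d_def
    by (simp add: W_facts(1,2)[OF n] W_facts(3)[OF n on] algebra_simps s2s)
  finally show "poly (char_poly ?S) x = poly ?T x" .
qed simp

lemma even_case: assumes n2: "n \<ge> 2" and en: "even n"
  shows "char_poly (sombor_matrix (4*n) (Q4n_enum n) (carrier (Q4n n)) (conj_super_enh_adj (Q4n n))) =
     [:- (- (4 * real n - 1) * sqrt 2), 1:] * [:- (- (2 * real n - 1) * sqrt 2), 1:] ^ (2*n - 3)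
     * [:- (- (real n + 1) * sqrt 2), 1:] ^ (2*n - 2) * [:- ((real n ^ 2 - 1) * sqrt 2), 1:]
     * ([:- (4 * real n - 1) * sqrt 2, 1:]
                     * [:- (real n - 1) * (real n + 1) * sqrt 2, 1:]
                     * [:- (2 * real n - 1) * (2 * real n - 3) * sqrt 2, 1:]
                   - [: 8 * (real n - 1) * (10 * real n ^ 2 - 6 * real n + 1) :]
                     * [:- (real n - 1) * (real n + 1) * sqrt 2, 1:]
                   - [: 4 * real n * (17 * real n ^ 2 - 6 * real n + 2) :]
                     * [:- (2 * real n - 3) * (2 * real n - 1) * sqrt 2, 1:])"
  (is "char_poly ?S = ?T")
proof (rule poly_eq_cofinite[of "{- W n 0 0, - W n 1 1, - W n 2 2, - W n 3 3}"])
  fix x assume x: "x \<notin> {- W n 0 0, - W n 1 1, - W n 2 2, - W n 3 3}"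
  have n: "n \<ge> 1" using n2 by auto
  define d where "d c = x + W n c c" for c
  have dnz: "d j \<noteq> 0" if "j < 4" for j
  proof -
    have "j = 0 \<or> j = 1 \<or> j = 2 \<or> j = 3" using that by auto
    thus ?thesis using x unfolding d_def by (auto simp: add_eq_0_iff)
  qed
  let ?M = "mat (4*n) (4*n) (\<lambda>(u,v). (if u = v then x else 0) - (if u = v then 0 else W n (cls n u) (cls n v)))"
  let ?Q = "mat 4 4 (\<lambda>(i,j). (if i = j then x + W n i i else 0) - W n i j * real (card {u. u < 4*n \<and> cls n u = j}))"
  have cd: "det ?M * (\<Prod>j<4. x + W n j j) = (\<Prod>u<4*n. x + W n (cls n u) (cls n u)) * det ?Q"
    by (rule class_det, insert dnz cls_lt(1), auto simp: d_def)
  have p1: "(\<Prod>u<4*n. x + W n (cls n u) (cls n u)) = (\<Prod>c<4. d c ^ sz n c)"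
    unfolding d_def sz_def by (rule prod_cls[of "4*n" "cls n" 4 "\<lambda>c. x + W n c c"], rule cls_lt(1))
  have s1: "real (sz n 1) = 2 * real n - 2"
  proof -
    have "sz n 1 = 2*n - 2" by (rule sz1[OF n])
    moreover have "2 \<le> 2*n" using n by simp
    ultimately show ?thesis by (simp add: of_nat_diff)
  qed
  have s2: "real (sz n 2) = real n" using en by (simp add: sz2e)
  have s3: "real (sz n 3) = real n" using en by (simp add: sz3e)
  have e1: "2*n - 2 = Suc (2*n - 3)" and e2: "n = Suc (n - 1)" and e3: "2*n - 2 = (n - 1) + (n - 1)" using n2 by auto
  have d32: "d 3 = d 2" unfolding d_def using W_facts(4,5)[OF n] en by simp
  have q1: "d 1 ^ (2*n-2) = d 1 * d 1 ^ (2*n-3)" by (subst e1, simp)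
  have q2: "d 2 ^ n = d 2 * d 2 ^ (n-1)" by (subst e2, simp)
  have q3: "d 2 ^ (2*n-2) = d 2 ^ (n-1) * d 2 ^ (n-1)" by (subst e3, simp add: power_add)
  have p1': "(\<Prod>c<4. d c ^ sz n c) = (d 0 * d 1 * d 2 * d 3) * (d 0 * d 1 ^ (2*n - 3) * d 2 ^ (2*n - 2))"
    unfolding prod4 sz0[OF n] sz1[OF n] sz2e[OF en] sz3e[OF en] q1 d32 q2 q3 by (simp add: power2_eq_square ac_simps)
  have p2: "(\<Prod>j<4. x + W n j j) = d 0 * d 1 * d 2 * d 3"
    unfolding prod4 d_def ..
  have nz: "d 0 * d 1 * d 2 * d 3 \<noteq> 0" using dnz[of 0] dnz[of 1] dnz[of 2] dnz[of 3] by auto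
  have dM: "det ?M = d 0 * d 1 ^ (2*n - 3) * d 2 ^ (2*n - 2) * det ?Q"
    using cd unfolding p1 p1' p2 using nz by (simp add: ac_simps)
  have dQ: "det ?Q = (x - (real n ^ 2 - 1) * sqrt 2) * poly ([:- (4 * real n - 1) * sqrt 2, 1:]
                     * [:- (real n - 1) * (real n + 1) * sqrt 2, 1:]
                     * [:- (2 * real n - 1) * (2 * real n - 3) * sqrt 2, 1:]
                   - [: 8 * (real n - 1) * (10 * real n ^ 2 - 6 * real n + 1) :]
                     * [:- (real n - 1) * (real n + 1) * sqrt 2, 1:]
                   - [: 4 * real n * (17 * real n ^ 2 - 6 * real n + 2) :]
                     * [:- (2 * real n - 3) * (2 * real n - 1) * sqrt 2, 1:]) x"
  proof -
    have sd: "card {u. u < 4*n \<and> cls n u = c} = sz n c" for c unfolding sz_def ..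
    define w1 where "w1 = W n 0 1"
    define w2 where "w2 = W n 0 2"
    define w3 where "w3 = W n 0 3"
    have ww1: "w1 * w1 = (4 * real n - 1)^2 + (2 * real n - 1)^2" unfolding w1_def by (rule W_facts(15)[OF n])
    have ww2: "w2 * w2 = (4 * real n - 1)^2 + (real n + 1)^2" unfolding w2_def by (rule W_facts(17)[OF n en])
    have ww3: "w3 * w3 = (4 * real n - 1)^2 + (real n + 1)^2" unfolding w3_def by (rule W_facts(18)[OF n en])
    have "det ?Q = (x - (4 * real n - 1) * sqrt 2) * (x - (2 * real n - 1) * (2 * real n - 3) * sqrt 2)
          * (x - (real n - 1) * (real n + 1) * sqrt 2) * (x - (real n - 1) * (real n + 1) * sqrt 2)
       - (w1 * w1) * (2 * (2 * real n - 2)) * (x - (real n - 1) * (real n + 1) * sqrt 2) * (x - (real n - 1) * (real n + 1) * sqrt 2)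
       - (w2 * w2) * (2 * real n) * (x - (2 * real n - 1) * (2 * real n - 3) * sqrt 2) * (x - (real n - 1) * (real n + 1) * sqrt 2)
       - (w3 * w3) * (2 * real n) * (x - (2 * real n - 1) * (2 * real n - 3) * sqrt 2) * (x - (real n - 1) * (real n + 1) * sqrt 2)"
      unfolding sd
      by (subst det4_arrow, simp_all add: W_facts(1,2,6-14)[OF n] W_facts(4,5)[OF n en] s1 s2 s3 sz0[OF n]
          w1_def[symmetric] w2_def[symmetric] w3_def[symmetric] algebra_simps s2s)
    also have "\<dots> = (x - (real n ^ 2 - 1) * sqrt 2) * poly ([:- (4 * real n - 1) * sqrt 2, 1:]
                     * [:- (real n - 1) * (real n + 1) * sqrt 2, 1:]
                     * [:- (2 * real n - 1) * (2 * real n - 3) * sqrt 2, 1:]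
                   - [: 8 * (real n - 1) * (10 * real n ^ 2 - 6 * real n + 1) :]
                     * [:- (real n - 1) * (real n + 1) * sqrt 2, 1:]
                   - [: 4 * real n * (17 * real n ^ 2 - 6 * real n + 2) :]
                     * [:- (2 * real n - 3) * (2 * real n - 1) * sqrt 2, 1:]) x"
      unfolding ww1 ww2 ww3 by (simp add: algebra_simps power2_eq_square s2s)
    finally show ?thesis .
  qed
  have "poly (char_poly ?S) x = det ?M" by (rule charpoly_S[OF n])
  also have "\<dots> = poly ?T x" unfolding dM dQ d_def
    by (simp add: W_facts(1,2)[OF n] W_facts(4)[OF n en] algebra_simps s2s)
  finally show "poly (char_poly ?S) x = poly ?T x" .
qed simp

lemma proots_lin_pow: "proots ([:- a, 1:] ^ m) = replicate_mset m (a::real)"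
  by (simp add: proots_power)

lemma char_poly_nz: "char_poly (sombor_matrix N vs V E) \<noteq> 0"
proof
  assume "char_poly (sombor_matrix N vs V E) = 0"
  with degree_monic_char_poly[OF S_carrier, of N vs V E] show False by simp
qed

lemma pm4: "(A::real poly) \<noteq> 0 \<Longrightarrow> B \<noteq> 0 \<Longrightarrow> C \<noteq> 0 \<Longrightarrow> P \<noteq> 0 \<Longrightarrow>
  proots (A*B*C*P) = proots A + proots B + proots C + proots P" by (simp add: proots_mult)
lemma pm5: "(A::real poly) \<noteq> 0 \<Longrightarrow> B \<noteq> 0 \<Longrightarrow> C \<noteq> 0 \<Longrightarrow> D \<noteq> 0 \<Longrightarrow> P \<noteq> 0 \<Longrightarrow>
  proots (A*B*C*D*P) = proots A + proots B + proots C + proots D + proots P" by (simp add: proots_mult)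
lemma nzP4: "(A::real poly) * B * C * P \<noteq> 0 \<Longrightarrow> P \<noteq> 0" by auto
lemma nzP5: "(A::real poly) * B * C * D * P \<noteq> 0 \<Longrightarrow> P \<noteq> 0" by auto

lemma proots_odd_shape: fixes a b c :: real
  shows "P \<noteq> 0 \<Longrightarrow> proots ([:-a,1:] * [:-b,1:]^k * [:-c,1:]^l * P) =
     replicate_mset 1 a + replicate_mset k b + replicate_mset l c + proots P"
  by (subst pm4, simp_all add: proots_power One_nat_def)

lemma proots_even_shape: fixes a b c d :: real
  shows "P \<noteq> 0 \<Longrightarrow> proots ([:-a,1:] * [:-b,1:]^k * [:-c,1:]^l * [:-d,1:] * P) =
     replicate_mset 1 a + replicate_mset k b + replicate_mset l c + replicate_mset 1 d + proots P"
  by (subst pm5, simp_all add: proots_power One_nat_def)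

theorem corollary5p7:
  fixes n :: nat
  assumes "n \<ge> 2"
  shows "(odd n \<longrightarrow> Q4n_CSEPG_spectrum n =
           replicate_mset 1 (- (4 * real n - 1) * sqrt 2)
         + replicate_mset (2*n - 3) (- (2 * real n - 1) * sqrt 2)
         + replicate_mset (2*n - 1) (- (2 * real n + 1) * sqrt 2)
         + proots ([:- (4 * real n - 1) * sqrt 2, 1:]
                     * [:- (2 * real n - 1) * (2 * real n - 3) * sqrt 2, 1:]
                     * [:- (2 * real n - 1) * (2 * real n + 1) * sqrt 2, 1:]
                   - [: 8 * (real n - 1) * (10 * real n ^ 2 - 6 * real n + 1) :]
                     * [:- (2 * real n - 1) * (2 * real n + 1) * sqrt 2, 1:]
                   - [: 8 * real n * (10 * real n ^ 2 - 2 * real n + 1) :]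
                     * [:- (2 * real n - 1) * (2 * real n - 3) * sqrt 2, 1:]))
       \<and> (even n \<longrightarrow> Q4n_CSEPG_spectrum n =
           replicate_mset 1 (- (4 * real n - 1) * sqrt 2)
         + replicate_mset (2*n - 3) (- (2 * real n - 1) * sqrt 2)
         + replicate_mset (2*n - 2) (- (real n + 1) * sqrt 2)
         + replicate_mset 1 ((real n ^ 2 - 1) * sqrt 2)
         + proots ([:- (4 * real n - 1) * sqrt 2, 1:]
                     * [:- (real n - 1) * (real n + 1) * sqrt 2, 1:]
                     * [:- (2 * real n - 1) * (2 * real n - 3) * sqrt 2, 1:]
                   - [: 8 * (real n - 1) * (10 * real n ^ 2 - 6 * real n + 1) :]
                     * [:- (real n - 1) * (real n + 1) * sqrt 2, 1:]
                   - [: 4 * real n * (17 * real n ^ 2 - 6 * real n + 2) :]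
                     * [:- (2 * real n - 3) * (2 * real n - 1) * sqrt 2, 1:]))"
proof -
  let ?S = "sombor_matrix (4*n) (Q4n_enum n) (carrier (Q4n n)) (conj_super_enh_adj (Q4n n))"
  have sp: "Q4n_CSEPG_spectrum n = proots (char_poly ?S)"
    unfolding Q4n_CSEPG_spectrum_def sombor_spectrum_def ..
  have nz: "char_poly ?S \<noteq> 0" by (rule char_poly_nz)
  show ?thesis
    apply (intro conjI impI)
    subgoal premises on
      unfolding sp odd_case[OF assms on]
      by (rule proots_odd_shape, rule nzP4, rule nz[unfolded odd_case[OF assms on]])
    subgoal premises en
      unfolding sp even_case[OF assms en]
      by (rule proots_even_shape, rule nzP5, rule nz[unfolded even_case[OF assms en]])
    done
qed


end
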